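(* Let $(\Theta,p,A,u,v)$ be any persuasion environment and suppose the receiver's updating rule is the geometric distortion $\mu^G_\alpha$ with $\alpha>0$. Then $\mathcal{V}^1(p,\mu^G_\alpha)=\mathcal{V}^2(p,\mu^G_\alpha)$.
   Context: A persuasion environment $(\Theta,p,A,u,v)$: finite state set $\Theta$, full-support prior $p\in\Delta(\Theta)$, finite action set $A$, receiver utility $u(a,\theta)$, sender utility $v(a)$ depending only on the action. $\hat a(q)$ is a sender-optimal selection from $\arg\max_{a}\mathbb{E}_q[u(a,\tilde\theta)]$ and $\hat v(q):=v(\hat a(q))$. The Bayesian sender chooses experiments $\sigma=(\sigma_\theta)_\theta$, $\sigma_\theta\in\Delta(S)$, $S$ a fixed sufficiently large finite signal set. Bayesian updating: $\mu_B(\sigma,p)(\theta\mid s)=\sigma_\theta(s)p(\theta)/\sum_{\theta'}\sigma_{\theta'}(s)p(\theta')$. Geometric distortion: $\mu^G_\alpha(\sigma,p)(\theta\mid s)=\frac{p(\theta)\sigma_\theta(s)^\alpha}{\sum_{\theta'}p(\theta')\sigma_{\theta'}(s)^\alpha}$; it satisfies $\mu^G_\alpha(\sigma,p)(\cdot\mid s)=D_p(\mu_B(\sigma,p)(\cdot\mid s))$ with $D_p(q)(\theta)=\frac{p(\theta)^{1-\alpha}q(\theta)^\alpha}{\sum_{\theta'}p(\theta')^{1-\alpha}q(\theta')^\alpha}$. One-shot: $\mathcal{R}(p)$ is the set of distributions $\rho$ over $\Delta(\Theta)$ with $\mathbb{E}_\rho[\tilde q]=p$; $\check v(q):=\hat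 v(D_p(q))$; $\mathcal{V}^1(p,\mu):=\{\mathbb{E}_\rho[\check v(\tilde q)]:\rho\in\mathcal{R}(p)\}$. Two-step: after a first experiment the sender's belief is the Bayesian posterior $q$ and the receiver's is $D_p(q)$; after a second experiment the sender's Bayesian posterior (from $q$) is $r$ and the receiver's belief is $D^{II}_q(r):=D_{D_p(q)}\!\left(\frac{r\cdot(D_p(q)/q)}{\sum_{\theta'}r(\theta')D_p(q)(\theta')/q(\theta')}\right)$ (componentwise). Let $\check v^q(r):=\hat v(D^{II}_q(r))$ and $\mathcal{V}^2(p,\mu):=\{\mathbb{E}_{\rho_1}[\mathbb{E}_{\rho_2(\tilde q)}[\check v^{\tilde q}(\tilde r)]]:\rho_1\in\mathcal{R}(p),\ \rho_2(q)\in\mathcal{R}(q)\ \forall q\in\operatorname{supp}\rho_1\}$. *)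

theory Defs
  imports "HOL-Probability.Probability_Mass_Function"
begin

definition beliefs :: "('th::finite \<Rightarrow> real) set" where
  "beliefs = {q. (\<forall>t. 0 \<le> q t) \<and> (\<Sum>t\<in>UNIV. q t) = 1}"

definition exp_util :: "('a \<Rightarrow> 'th::finite \<Rightarrow> real) \<Rightarrow> ('th \<Rightarrow> real) \<Rightarrow> 'a \<Rightarrow> real" where
  "exp_util u q a = (\<Sum>t\<in>UNIV. q t * u a t)"

definition best_actions :: "('a::finite \<Rightarrow> 'th::finite \<Rightarrow> real) \<Rightarrow> ('th \<Rightarrow> real) \<Rightarrow> 'a set" where
  "best_actions u q = {a. \<forall>b. exp_util u q b \<le> exp_util u q a}"

text \<open>Sender value under a sender-optimal selection: v(hat a(q)).\<close>
definition vhat :: "('a::finite \<Rightarrow> 'th::finite \<Rightarrow> real) \<Rightarrow> ('a \<Rightarrow> real) \<Rightarrow> ('th \<Rightarrow> real) \<Rightarrow> real" where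
  "vhat u v q = Max (v ` best_actions u q)"

definition Dist :: "real \<Rightarrow> ('th::finite \<Rightarrow> real) \<Rightarrow> ('th \<Rightarrow> real) \<Rightarrow> ('th \<Rightarrow> real)" where
  "Dist \<alpha> p q = (\<lambda>t. p t powr (1 - \<alpha>) * q t powr \<alpha> /
                      (\<Sum>t'\<in>UNIV. p t' powr (1 - \<alpha>) * q t' powr \<alpha>))"

definition DistII :: "real \<Rightarrow> ('th::finite \<Rightarrow> real) \<Rightarrow> ('th \<Rightarrow> real) \<Rightarrow> ('th \<Rightarrow> real) \<Rightarrow> ('th \<Rightarrow> real)" where
  "DistII \<alpha> p q r =
     (let d = Dist \<alpha> p q;
          w = (\<lambda>t. r t * d t / q t / (\<Sum>t'\<in>UNIV. r t' * d t' / q t'))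
      in Dist \<alpha> d w)"

definition splits :: "('th::finite \<Rightarrow> real) \<Rightarrow> ('th \<Rightarrow> real) pmf set" where
  "splits p = {\<rho>. finite (set_pmf \<rho>) \<and> set_pmf \<rho> \<subseteq> beliefs \<and>
                  (\<forall>t. measure_pmf.expectation \<rho> (\<lambda>q. q t) = p t)}"

definition V1 :: "('a::finite \<Rightarrow> 'th::finite \<Rightarrow> real) \<Rightarrow> ('a \<Rightarrow> real) \<Rightarrow> real \<Rightarrow> ('th \<Rightarrow> real) \<Rightarrow> real set" where
  "V1 u v \<alpha> p = {measure_pmf.expectation \<rho> (\<lambda>q. vhat u v (Dist \<alpha> p q)) | \<rho>. \<rho> \<in> splits p}"

definition V2 :: "('a::finite \<Rightarrow> 'th::finite \<Rightarrow> real) \<Rightarrow> ('a \<Rightarrow> real) \<Rightarrow> real \<Rightarrow> ('th \<Rightarrow> real) \<Rightarrow> real set" where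
  "V2 u v \<alpha> p = {measure_pmf.expectation \<rho>1
                     (\<lambda>q. measure_pmf.expectation (\<rho>2 q) (\<lambda>r. vhat u v (DistII \<alpha> p q r)))
                   | \<rho>1 \<rho>2. \<rho>1 \<in> splits p \<and> (\<forall>q\<in>set_pmf \<rho>1. \<rho>2 q \<in> splits q)}"

end

theory Submission
  imports Defs
begin

lemma exp_cong_pmf:
  assumes "\<And>x. x \<in> set_pmf M \<Longrightarrow> f x = g x"
  shows "measure_pmf.expectation M f = measure_pmf.expectation M (g :: _ \<Rightarrow> real)"
  using assms by (intro integral_cong_AE) (auto simp: AE_measure_pmf_iff)

lemma exp_bind_finite:
  fixes f :: "'b \<Rightarrow> real"
  assumes fM: "finite (set_pmf M)" and fN: "\<And>x. x \<in> set_pmf M \<Longrightarrow> finite (set_pmf (N x))"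
  shows "measure_pmf.expectation (bind_pmf M N) f
         = measure_pmf.expectation M (\<lambda>x. measure_pmf.expectation (N x) f)"
proof -
  define A where "A = set_pmf M"
  define B where "B = (\<Union>x\<in>A. set_pmf (N x))"
  have fA: "finite A" using fM A_def by simp
  have fB: "finite B" using fN fA A_def B_def by auto
  have pb: "pmf (bind_pmf M N) b = (\<Sum>a\<in>A. pmf (N a) b * pmf M a)" for b
    unfolding pmf_bind by (rule integral_measure_pmf_real[OF fA]) (auto simp: A_def)
  have "measure_pmf.expectation (bind_pmf M N) f = (\<Sum>b\<in>B. f b * pmf (bind_pmf M N) b)"
    by (rule integral_measure_pmf_real[OF fB]) (auto simp: A_def B_def)
  also have "\<dots> = (\<Sum>b\<in>B. \<Sum>a\<in>A. f b * pmf (N a) b * pmf M a)"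
    by (simp add: pb sum_distrib_left mult.assoc)
  also have "\<dots> = (\<Sum>a\<in>A. \<Sum>b\<in>B. f b * pmf (N a) b * pmf M a)"
    by (rule sum.swap)
  also have "\<dots> = (\<Sum>a\<in>A. measure_pmf.expectation (N a) f * pmf M a)"
  proof (rule sum.cong[OF refl])
    fix a assume a: "a \<in> A"
    have "measure_pmf.expectation (N a) f = (\<Sum>b\<in>B. f b * pmf (N a) b)"
      by (rule integral_measure_pmf_real[OF fB]) (use a in \<open>auto simp: B_def\<close>)
    then show "(\<Sum>b\<in>B. f b * pmf (N a) b * pmf M a) = measure_pmf.expectation (N a) f * pmf M a"
      by (simp add: sum_distrib_right)
  qed
  also have "\<dots> = measure_pmf.expectation M (\<lambda>x. measure_pmf.expectation (N x) f)"
    by (rule integral_measure_pmf_real[OF fA, symmetric]) (auto simp: A_def)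
  finally show ?thesis .
qed

lemma belief_pos:
  assumes "q \<in> beliefs" shows "\<exists>t. q t > 0"
proof (rule ccontr)
  assume "\<not> ?thesis"
  then have "\<forall>t. q t = 0" using assms unfolding beliefs_def by (auto simp: not_less intro: antisym)
  then show False using assms unfolding beliefs_def by simp
qed

lemma DistII_eq:
  fixes p q r :: "'th::finite \<Rightarrow> real"
  assumes pp: "\<forall>t. p t > 0" and a: "\<alpha> > 0" and q: "q \<in> beliefs" and r: "r \<in> beliefs"
    and qr: "\<forall>t. q t = 0 \<longrightarrow> r t = 0"
  shows "DistII \<alpha> p q r = Dist \<alpha> p r"
proof -
  have pne[simp]: "p t \<noteq> 0" for t using pp by (metis less_irrefl)
  have qn: "q t \<ge> 0" for t using q by (auto simp: beliefs_def)
  have rn: "r t \<ge> 0" for t using r by (auto simp: beliefs_def)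
  define Z1 where "Z1 = (\<Sum>t\<in>UNIV. p t powr (1 - \<alpha>) * q t powr \<alpha>)"
  define d where "d = Dist \<alpha> p q"
  define S where "S = (\<Sum>t'\<in>UNIV. r t' * d t' / q t')"
  define w where "w = (\<lambda>t. r t * d t / q t / S)"
  define X where "X = (\<lambda>t. p t powr (1 - \<alpha>) * r t powr \<alpha>)"
  have dd: "d t = p t powr (1 - \<alpha>) * q t powr \<alpha> / Z1" for t
    by (simp add: d_def Dist_def Z1_def)
  obtain t0 where t0: "q t0 > 0" using belief_pos[OF q] by blast
  have Z1: "Z1 > 0" unfolding Z1_def
    by (rule sum_pos2[where i=t0]) (use pp t0 qn in \<open>auto intro!: mult_pos_pos simp: less_imp_neq[OF pp[rule_format], symmetric]\<close>)
  have dpos: "q t > 0 \<Longrightarrow> d t > 0" for t using Z1 pp by (simp add: dd divide_pos_pos mult_pos_pos)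
  obtain t1 where t1: "r t1 > 0" using belief_pos[OF r] by blast
  have qt1: "q t1 > 0" using t1 qr qn[of t1] by (metis less_eq_real_def less_irrefl)
  have S: "S > 0" unfolding S_def
  proof (rule sum_pos2[where i=t1])
    show "0 < r t1 * d t1 / q t1" using t1 qt1 dpos[OF qt1] by simp
    show "\<And>i. i \<in> UNIV \<Longrightarrow> 0 \<le> r i * d i / q i"
    proof -
      fix i
      show "0 \<le> r i * d i / q i"
      proof (cases "q i > 0")
        case True then show ?thesis using dpos[OF True] rn[of i] by simp
      next
        case False then have "q i = 0" using qn[of i] by simp
        then show ?thesis by simp
      qed
    qed
  qed simp_all
  define c where "c = exp (- ln Z1 - \<alpha> * ln S)"
  have c: "c > 0" by (simp add: c_def)
  have key: "d t powr (1 - \<alpha>) * w t powr \<alpha> = c * X t" for t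
  proof (cases "r t = 0")
    case True then show ?thesis by (simp add: w_def X_def)
  next
    case False
    then have rt: "r t > 0" using rn[of t] by simp
    have qt: "q t > 0" using qr qn[of t] False by (metis less_eq_real_def)
    have dt: "d t > 0" using dpos[OF qt] .
    have wt: "w t > 0" using rt dt qt S by (simp add: w_def)
    have pt: "p t > 0" using pp by simp
    have ld: "ln (d t) = (1 - \<alpha>) * ln (p t) + \<alpha> * ln (q t) - ln Z1"
      using pt qt Z1 by (simp add: dd ln_div ln_mult ln_powr)
    have lw: "ln (w t) = ln (r t) + ln (d t) - ln (q t) - ln S"
      using rt dt qt S by (simp add: w_def ln_div ln_mult)
    have "d t powr (1 - \<alpha>) * w t powr \<alpha> = exp ((1 - \<alpha>) * ln (d t) + \<alpha> * ln (w t))"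
      using dt wt by (simp add: powr_def exp_add mult.commute)
    also have "(1 - \<alpha>) * ln (d t) + \<alpha> * ln (w t) = (- ln Z1 - \<alpha> * ln S) + ((1 - \<alpha>) * ln (p t) + \<alpha> * ln (r t))"
      unfolding lw ld by (simp add: algebra_simps)
    also have "exp \<dots> = c * X t"
      using pt rt by (simp add: c_def X_def exp_add powr_def mult.commute)
    finally show ?thesis .
  qed
  have "DistII \<alpha> p q r = Dist \<alpha> d w"
    by (simp add: DistII_def Let_def d_def[symmetric] S_def[symmetric] w_def)
  also have "\<dots> = (\<lambda>t. c * X t / (\<Sum>t'\<in>UNIV. c * X t'))"
    by (simp add: Dist_def key)
  also have "\<dots> = (\<lambda>t. X t / (\<Sum>t'\<in>UNIV. X t'))"
    using c by (simp add: sum_distrib_left[symmetric])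
  also have "\<dots> = Dist \<alpha> p r" by (simp add: Dist_def X_def)
  finally show ?thesis .
qed

lemma return_splits: "q \<in> beliefs \<Longrightarrow> return_pmf q \<in> splits q"
  unfolding splits_def by (intro CollectI conjI allI) auto

lemma supp_zero:
  assumes "\<rho> \<in> splits q" "r \<in> set_pmf \<rho>" "q t = 0"
  shows "r t = 0"
proof -
  have fin: "finite (set_pmf \<rho>)" using assms(1) unfolding splits_def by blast
  have sub: "set_pmf \<rho> \<subseteq> beliefs" using assms(1) unfolding splits_def by blast
  have m: "measure_pmf.expectation \<rho> (\<lambda>x. x t) = q t" using assms(1) unfolding splits_def by blast
  have nn: "\<forall>x\<in>set_pmf \<rho>. 0 \<le> x t * pmf \<rho> x"
  proof
    fix x assume "x \<in> set_pmf \<rho>"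
    then have "x \<in> beliefs" using sub by blast
    then have "0 \<le> x t" unfolding beliefs_def by blast
    then show "0 \<le> x t * pmf \<rho> x" by simp
  qed
  have e: "measure_pmf.expectation \<rho> (\<lambda>x. x t) = (\<Sum>x\<in>set_pmf \<rho>. x t * pmf \<rho> x)"
    by (rule integral_measure_pmf_real[OF fin]) 
  have "(\<Sum>x\<in>set_pmf \<rho>. x t * pmf \<rho> x) = 0"
    using m assms(3) e by simp
  then have all: "\<forall>x\<in>set_pmf \<rho>. x t * pmf \<rho> x = 0"
    using sum_nonneg_eq_0_iff[OF fin, of "\<lambda>x. x t * pmf \<rho> x"] nn by auto
  then have "r t * pmf \<rho> r = 0" using assms(2) by auto
  moreover have "pmf \<rho> r > 0" using assms(2) by (simp add: pmf_positive)
  ultimately show ?thesis by simp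
qed

theorem corollary1:
  fixes p :: "'th::finite \<Rightarrow> real"
    and u :: "'a::finite \<Rightarrow> 'th \<Rightarrow> real"
    and v :: "'a \<Rightarrow> real"
    and \<alpha> :: real
  assumes "p \<in> beliefs"
    and "\<forall>t. p t > 0"
    and "\<alpha> > 0"
  shows "V1 u v \<alpha> p = V2 u v \<alpha> p"
proof
  show "V1 u v \<alpha> p \<subseteq> V2 u v \<alpha> p"
  proof
    fix x assume "x \<in> V1 u v \<alpha> p"
    then obtain \<rho> where \<rho>: "\<rho> \<in> splits p"
      and x: "x = measure_pmf.expectation \<rho> (\<lambda>q. vhat u v (Dist \<alpha> p q))"
      unfolding V1_def by blast
    have bel: "q \<in> set_pmf \<rho> \<Longrightarrow> q \<in> beliefs" for q using \<rho> by (auto simp: splits_def)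
    have "x = measure_pmf.expectation \<rho>
          (\<lambda>q. measure_pmf.expectation (return_pmf q) (\<lambda>r. vhat u v (DistII \<alpha> p q r)))"
      unfolding x
    proof (rule exp_cong_pmf)
      fix q assume q: "q \<in> set_pmf \<rho>"
      show "vhat u v (Dist \<alpha> p q) =
            measure_pmf.expectation (return_pmf q) (\<lambda>r. vhat u v (DistII \<alpha> p q r))"
        using DistII_eq[OF assms(2,3) bel[OF q] bel[OF q]] by simp
    qed
    then show "x \<in> V2 u v \<alpha> p"
      unfolding V2_def
      by (intro CollectI exI[of _ \<rho>] exI[of _ return_pmf] conjI ballI return_splits \<rho> bel)
  qed
next
  show "V2 u v \<alpha> p \<subseteq> V1 u v \<alpha> p"
  proof
    fix x assume "x \<in> V2 u v \<alpha> p"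
    then obtain \<rho>1 \<rho>2 where r1: "\<rho>1 \<in> splits p" and r2: "\<forall>q\<in>set_pmf \<rho>1. \<rho>2 q \<in> splits q"
      and x: "x = measure_pmf.expectation \<rho>1
                (\<lambda>q. measure_pmf.expectation (\<rho>2 q) (\<lambda>r. vhat u v (DistII \<alpha> p q r)))"
      unfolding V2_def by blast
    have f1: "finite (set_pmf \<rho>1)" using r1 by (simp add: splits_def)
    have f2: "q \<in> set_pmf \<rho>1 \<Longrightarrow> finite (set_pmf (\<rho>2 q))" for q using r2 by (simp add: splits_def)
    have b1: "q \<in> set_pmf \<rho>1 \<Longrightarrow> q \<in> beliefs" for q using r1 by (auto simp: splits_def)
    have b2: "q \<in> set_pmf \<rho>1 \<Longrightarrow> r \<in> set_pmf (\<rho>2 q) \<Longrightarrow> r \<in> beliefs" for q r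
      using r2 by (auto simp: splits_def)
    have m2: "q \<in> set_pmf \<rho>1 \<Longrightarrow> measure_pmf.expectation (\<rho>2 q) (\<lambda>r. r t) = q t" for q t
      using r2 by (auto simp: splits_def)
    have "x = measure_pmf.expectation \<rho>1
                (\<lambda>q. measure_pmf.expectation (\<rho>2 q) (\<lambda>r. vhat u v (Dist \<alpha> p r)))"
      unfolding x
    proof (rule exp_cong_pmf)
      fix q assume q: "q \<in> set_pmf \<rho>1"
      show "measure_pmf.expectation (\<rho>2 q) (\<lambda>r. vhat u v (DistII \<alpha> p q r)) =
            measure_pmf.expectation (\<rho>2 q) (\<lambda>r. vhat u v (Dist \<alpha> p r))"
      proof (rule exp_cong_pmf)
        fix r assume r: "r \<in> set_pmf (\<rho>2 q)"
        have "\<forall>t. q t = 0 \<longrightarrow> r t = 0"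
          using supp_zero[of "\<rho>2 q" q r] r2 q r by blast
        then show "vhat u v (DistII \<alpha> p q r) = vhat u v (Dist \<alpha> p r)"
          using DistII_eq[OF assms(2,3) b1[OF q] b2[OF q r]] by simp
      qed
    qed
    also have "\<dots> = measure_pmf.expectation (bind_pmf \<rho>1 \<rho>2) (\<lambda>r. vhat u v (Dist \<alpha> p r))"
      by (rule exp_bind_finite[OF f1 f2, symmetric])
    finally have xe: "x = measure_pmf.expectation (bind_pmf \<rho>1 \<rho>2) (\<lambda>r. vhat u v (Dist \<alpha> p r))" .
    have "bind_pmf \<rho>1 \<rho>2 \<in> splits p"
      unfolding splits_def
    proof (intro CollectI conjI allI)
      show "finite (set_pmf (bind_pmf \<rho>1 \<rho>2))" using f1 f2 by simp
      show "set_pmf (bind_pmf \<rho>1 \<rho>2) \<subseteq> beliefs" using b2 by auto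
      fix t
      have "measure_pmf.expectation (bind_pmf \<rho>1 \<rho>2) (\<lambda>q. q t)
            = measure_pmf.expectation \<rho>1 (\<lambda>q. measure_pmf.expectation (\<rho>2 q) (\<lambda>r. r t))"
        by (rule exp_bind_finite[OF f1 f2])
      also have "\<dots> = measure_pmf.expectation \<rho>1 (\<lambda>q. q t)"
        by (rule exp_cong_pmf) (simp add: m2)
      also have "\<dots> = p t" using r1 by (simp add: splits_def)
      finally show "measure_pmf.expectation (bind_pmf \<rho>1 \<rho>2) (\<lambda>q. q t) = p t" .
    qed
    then show "x \<in> V1 u v \<alpha> p" unfolding V1_def
      by (intro CollectI exI[of _ "bind_pmf \<rho>1 \<rho>2"] conjI xe)
  qed
qed

end
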